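(* In the imperfect-anticipation two-period setting described in the context, suppose: (i) $\{Y_{i0}(a,d),Y_{i1}(d),D_i,A_i\}_{i=1}^n$ are i.i.d. across $i$; (ii) $Y_{i0}(0,0)=Y_{i0}(0,1)=Y_{i0}(1,0)=Y_{i0}(-1,1)$ and $Y_{i0}(-1,0)=Y_{i0}(1,1)$; (iii) $\mathbb{E}[g(Y_{i1}(0))-g(Y_{i0}(0,0))\mid D_i=1]=\mathbb{E}[g(Y_{i1}(0))-g(Y_{i0}(0,0))\mid D_i=0]$; (iv) $\mathbb{P}[A_i\neq0\mid D_i=1]\le\pi$, $\mathbb{P}[A_i\neq0\mid D_i=0]\le\pi$, and $\mathbb{P}[A_i=-1\mid D_i=1,A_i\ne0]=\mathbb{P}[A_i=-1\mid D_i=0,A_i\ne0]=\varepsilon$; (v) $|\tau_g|\le|\mu_g|$. Let $m_g=\mathbb{E}[g(Y_{i1})-g(Y_{i0})\mid D_i=1]-\mathbb{E}[g(Y_{i1})-g(Y_{i0})\mid D_i=0]$, $\mu_{g,1}(\varepsilon)=\frac{m_g}{1+\operatorname{sgn}(\tau_g\mu_g)\pi\varepsilon}$ and $\mu_{g,2}(\varepsilon)=\frac{m_g}{1-\operatorname{sgn}(\tau_g\mu_g)\pi(1-\varepsilon)}$. Then \[\mu_g\in\left[\min\{\mu_{g,1}(\varepsilon),\mu_{g,2}(\varepsilon)\},\ \max\{\mu_{g,1}(\varepsilon),\mu_{g,2}(\varepsilon)\}\right].\]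
   Context: Two periods $t\in\{0,1\}$, units $i=1,\dots,n$. Each unit has an observed binary treatment $D_i\in\{0,1\}$ (in period 1) and an unobserved anticipation status $A_i\in\{-1,0,1\}$ in period 0: $A_i=0$ means no anticipation, $A_i=1$ means the unit anticipates and its anticipated treatment status equals its actual $D_i$, $A_i=-1$ means it anticipates incorrectly (anticipated status $1-D_i$). Potential outcomes: period 0, $Y_{i0}(a,d)$ for $a\in\{-1,0,1\}$, $d\in\{0,1\}$; period 1, $Y_{i1}(d)$. Observed outcomes: $Y_{i0}=Y_{i0}(A_i,D_i)$, $Y_{i1}=Y_{i1}(D_i)$. $g$ is a known measurable real function with finite expectations of $g$ of the outcomes; $\pi\in(0,1)$ and $\varepsilon\in[0,1]$ are given. Parameter of interest: $\mu_g=\mathbb{E}[g(Y_{i1}(1))-g(Y_{i1}(0))\mid D_i=1]$. The anticipatory effect $\tau_g$ is defined by $\tau_g=\mathbb{E}[g(Y_{i0}(1,1))-g(Y_{i0}(0,0))\mid D_i=1,A_i=1]=\mathbb{E}[g(Y_{i0}(-1,0))-g(Y_{i0}(0,0))\mid D_i=1,A_i=-1]$, the model requiring these two quantities to be equal. $\operatorname{sgn}$ is the sign function. *)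

theory Defs
  imports "HOL-Probability.Probability"
begin

text \<open>Anticipation status in period 0: AM1 = -1 (incorrect anticipation),
  A0 = 0 (no anticipation), A1 = 1 (correct anticipation).
  Treatment status d is encoded as bool (True = 1, False = 0).\<close>
datatype antic = AM1 | A0 | A1

definition cexp :: "'w measure \<Rightarrow> ('w \<Rightarrow> real) \<Rightarrow> ('w \<Rightarrow> bool) \<Rightarrow> real" where
  "cexp M X B = (\<integral>\<omega>. indicator {\<omega> \<in> space M. B \<omega>} \<omega> * X \<omega> \<partial>M)
                 / measure M {\<omega> \<in> space M. B \<omega>}"

definition cprob :: "'w measure \<Rightarrow> ('w \<Rightarrow> bool) \<Rightarrow> ('w \<Rightarrow> bool) \<Rightarrow> real" where
  "cprob M E B = measure M {\<omega> \<in> space M. E \<omega> \<and> B \<omega>} / measure M {\<omega> \<in> space M. B \<omega>}"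

definition unit_space ::
  "((antic \<times> bool \<Rightarrow> real) \<times> (bool \<Rightarrow> real) \<times> bool \<times> antic) measure" where
  "unit_space = (PiM UNIV (\<lambda>_. borel)) \<Otimes>\<^sub>M (PiM UNIV (\<lambda>_. borel))
                \<Otimes>\<^sub>M count_space UNIV \<Otimes>\<^sub>M count_space UNIV"

definition unit_data ::
  "(nat \<Rightarrow> antic \<Rightarrow> bool \<Rightarrow> 'w \<Rightarrow> real) \<Rightarrow> (nat \<Rightarrow> bool \<Rightarrow> 'w \<Rightarrow> real)
   \<Rightarrow> (nat \<Rightarrow> 'w \<Rightarrow> bool) \<Rightarrow> (nat \<Rightarrow> 'w \<Rightarrow> antic) \<Rightarrow> nat \<Rightarrow> 'w
   \<Rightarrow> (antic \<times> bool \<Rightarrow> real) \<times> (bool \<Rightarrow> real) \<times> bool \<times> antic" where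
  "unit_data Y0 Y1 D A j \<omega> =
     ((\<lambda>(a, d). Y0 j a d \<omega>), (\<lambda>d. Y1 j d \<omega>), D j \<omega>, A j \<omega>)"

end

theory Submission
  imports Defs
begin

lemma between:
  fixes m mu x a b :: real
  assumes "0 < a" "a \<le> x" "x \<le> b" "m = mu * x"
  shows "min (m / b) (m / a) \<le> mu \<and> mu \<le> max (m / b) (m / a)"
proof -
  have b: "0 < b" using assms by linarith
  have x: "0 < x" using assms by linarith
  have mu: "mu = m / x" using assms x by simp
  show ?thesis
  proof (cases "m \<ge> 0")
    case True
    have "m / b \<le> m / x" using True x assms by (intro divide_left_mono) auto
    moreover have "m / x \<le> m / a" using True x assms by (intro divide_left_mono) auto
    ultimately show ?thesis using mu by linarith
  next
    case False
    have "m / b \<ge> m / x" using False x assms by (intro divide_left_mono_neg) auto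
    moreover have "m / x \<ge> m / a" using False x assms by (intro divide_left_mono_neg) auto
    ultimately show ?thesis using mu by linarith
  qed
qed

lemma alg:
  fixes m mu tau k pi eps :: real
  assumes "m = mu - tau * k" "-(pi*eps) \<le> k" "k \<le> pi*(1-eps)" "\<bar>tau\<bar> \<le> \<bar>mu\<bar>"
   "0 < pi" "pi < 1" "0 \<le> eps" "eps \<le> 1"
  shows "min (m / (1 + sgn (tau * mu) * pi * eps)) (m / (1 - sgn (tau * mu) * pi * (1 - eps))) \<le> mu
       \<and> mu \<le> max (m / (1 + sgn (tau * mu) * pi * eps)) (m / (1 - sgn (tau * mu) * pi * (1 - eps)))"
proof (cases "tau * mu = 0")
  case True
  then show ?thesis using assms by (auto simp: sgn_mult)
next
  case False
  hence mu0: "mu \<noteq> 0" by auto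
  define r where "r = tau / mu"
  have tau: "tau = r * mu" using mu0 r_def by simp
  have r1: "\<bar>r\<bar> \<le> 1" using assms(4) mu0 by (simp add: r_def abs_divide divide_le_eq_1)
  have mm: "m = mu * (1 - r*k)" using assms(1) tau by (simp add: algebra_simps)
  have pe: "0 \<le> pi*eps" "pi*eps \<le> pi" "0 \<le> pi*(1-eps)" "pi*(1-eps) \<le> pi"
    using assms by (auto simp: mult_left_le)
  have rk: "\<bar>r*k\<bar> \<le> \<bar>k\<bar>" using r1 by (simp add: abs_mult mult_left_le_one_le)
  show ?thesis
  proof (cases "r > 0")
    case True
    have s: "sgn (tau*mu) = 1" using True mu0 tau by (simp add: sgn_mult zero_less_mult_iff)
    have a: "r*k \<le> pi*(1-eps)"
    proof (cases "k \<ge> 0")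
      case True thus ?thesis using rk assms(3) by linarith
    next
      case False thus ?thesis using \<open>r>0\<close> pe by (smt (verit) mult_pos_neg)
    qed
    have b: "-(pi*eps) \<le> r*k"
    proof (cases "k \<ge> 0")
      case True thus ?thesis using \<open>r>0\<close> pe by (smt (verit) mult_nonneg_nonneg)
    next
      case False thus ?thesis using rk assms(2) by linarith
    qed
    have "min (m / (1 + pi*eps)) (m / (1 - pi*(1-eps))) \<le> mu \<and> mu \<le> max (m / (1 + pi*eps)) (m / (1 - pi*(1-eps)))"
      by (rule between[where x="1 - r*k"]) (use a b pe mm assms(6) in auto)
    thus ?thesis unfolding s by simp
  next
    case False
    hence rn: "r < 0" using False tau \<open>tau*mu \<noteq> 0\<close> by (cases "r = 0") auto
    have s: "sgn (tau*mu) = -1" using rn mu0 tau by (simp add: sgn_mult mult_less_0_iff)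
    have a: "r*k \<le> pi*eps"
    proof (cases "k \<le> 0")
      case False thus ?thesis using rn pe by (smt (verit) mult_neg_pos)
    next
      case True thus ?thesis using rk assms(2) by linarith
    qed
    have b: "-(pi*(1-eps)) \<le> r*k"
    proof (cases "k \<le> 0")
      case False thus ?thesis using rk assms(3) by linarith
    next
      case True thus ?thesis using rn pe by (smt (verit) mult_nonpos_nonpos)
    qed
    have "min (m / (1 + pi*(1-eps))) (m / (1 - pi*eps)) \<le> mu \<and> mu \<le> max (m / (1 + pi*(1-eps))) (m / (1 - pi*eps))"
      by (rule between[where x="1 - r*k"]) (use a b pe mm assms(6) in auto)
    hence "min (m / (1 - pi*eps)) (m / (1 + pi*(1-eps))) \<le> mu \<and> mu \<le> max (m / (1 - pi*eps)) (m / (1 + pi*(1-eps)))"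
      by (metis min.commute max.commute)
    thus ?thesis unfolding s by simp
  qed
qed

lemma int_ind:
  assumes "S \<in> sets M" "integrable M f"
  shows "integrable M (\<lambda>x. indicator S x * f x :: real)"
  using integrable_real_mult_indicator[OF assms] by (simp add: mult.commute)

lemma int_null:
  assumes "prob_space M" "S \<in> sets M" "measure M S = 0"
  shows "(\<integral>x. indicator S x * f x \<partial>M) = (0::real)"
proof -
  interpret prob_space M by fact
  have "S \<in> null_sets M" using assms by (auto simp: null_sets_def emeasure_eq_measure)
  hence "AE x in M. x \<notin> S" by (rule AE_not_in)
  hence "AE x in M. indicator S x * f x = 0" by eventually_elim simp
  thus ?thesis by (rule integral_eq_zero_AE)
qed

lemma cexp_mult:
  assumes "prob_space M" "{x \<in> space M. B x} \<in> sets M"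
  shows "cexp M f B * measure M {x \<in> space M. B x} = (\<integral>x. indicator {x \<in> space M. B x} x * f x \<partial>M)"
  using int_null[OF assms, of f] by (cases "measure M {x \<in> space M. B x} = 0") (auto simp: cexp_def)

lemma cprob_mult:
  assumes "prob_space M" "{x \<in> space M. E x \<and> B x} \<subseteq> {x \<in> space M. B x}" "{x \<in> space M. B x} \<in> sets M"
  shows "cprob M E B * measure M {x \<in> space M. B x} = measure M {x \<in> space M. E x \<and> B x}"
proof (cases "measure M {x \<in> space M. B x} = 0")
  case True
  interpret prob_space M by fact
  have "measure M {x \<in> space M. E x \<and> B x} \<le> measure M {x \<in> space M. B x}"
    by (rule finite_measure_mono[OF assms(2,3)])
  then show ?thesis using True by (simp add: cprob_def measure_nonneg antisym)
next
  case False
  then show ?thesis by (simp add: cprob_def)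
qed

theorem theorem3:
  fixes M :: "'w measure" and n i :: nat
    and Y0 :: "nat \<Rightarrow> antic \<Rightarrow> bool \<Rightarrow> 'w \<Rightarrow> real"
    and Y1 :: "nat \<Rightarrow> bool \<Rightarrow> 'w \<Rightarrow> real"
    and D :: "nat \<Rightarrow> 'w \<Rightarrow> bool" and A :: "nat \<Rightarrow> 'w \<Rightarrow> antic"
    and g :: "real \<Rightarrow> real" and \<pi> \<epsilon> \<tau> \<mu> m :: real
  assumes P: "prob_space M"
    and i: "i \<in> {1..n}"
    and meas_Y0: "\<And>j a d. j \<in> {1..n} \<Longrightarrow> Y0 j a d \<in> borel_measurable M"
    and meas_Y1: "\<And>j d. j \<in> {1..n} \<Longrightarrow> Y1 j d \<in> borel_measurable M"
    and meas_D: "\<And>j. j \<in> {1..n} \<Longrightarrow> D j \<in> measurable M (count_space UNIV)"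
    and meas_A: "\<And>j. j \<in> {1..n} \<Longrightarrow> A j \<in> measurable M (count_space UNIV)"
    and g_meas: "g \<in> borel_measurable borel"
    and int_Y0: "\<And>j a d. j \<in> {1..n} \<Longrightarrow> integrable M (\<lambda>\<omega>. g (Y0 j a d \<omega>))"
    and int_Y1: "\<And>j d. j \<in> {1..n} \<Longrightarrow> integrable M (\<lambda>\<omega>. g (Y1 j d \<omega>))"
    \<comment> \<open>(i) i.i.d. across units\<close>
    and indep: "prob_space.indep_vars M (\<lambda>_. unit_space) (unit_data Y0 Y1 D A) {1..n}"
    and ident: "\<And>j k. j \<in> {1..n} \<Longrightarrow> k \<in> {1..n} \<Longrightarrow>
                  distr M unit_space (unit_data Y0 Y1 D A j) = distr M unit_space (unit_data Y0 Y1 D A k)"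
    \<comment> \<open>implicit: conditioning events D=1 and D=0 have positive probability\<close>
    and D_pos: "0 < measure M {\<omega> \<in> space M. D i \<omega>}"
    and D_lt1: "measure M {\<omega> \<in> space M. D i \<omega>} < 1"
    and pi: "0 < \<pi>" "\<pi> < 1" and eps: "0 \<le> \<epsilon>" "\<epsilon> \<le> 1"
    \<comment> \<open>(ii)\<close>
    and ii: "\<And>j \<omega>. j \<in> {1..n} \<Longrightarrow> \<omega> \<in> space M \<Longrightarrow>
               Y0 j A0 False \<omega> = Y0 j A0 True \<omega> \<and> Y0 j A0 False \<omega> = Y0 j A1 False \<omega>
             \<and> Y0 j A0 False \<omega> = Y0 j AM1 True \<omega> \<and> Y0 j AM1 False \<omega> = Y0 j A1 True \<omega>"
    \<comment> \<open>(iii) parallel trends\<close>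
    and iii: "cexp M (\<lambda>\<omega>. g (Y1 i False \<omega>) - g (Y0 i A0 False \<omega>)) (D i)
            = cexp M (\<lambda>\<omega>. g (Y1 i False \<omega>) - g (Y0 i A0 False \<omega>)) (\<lambda>\<omega>. \<not> D i \<omega>)"
    \<comment> \<open>(iv)\<close>
    and iv1: "cprob M (\<lambda>\<omega>. A i \<omega> \<noteq> A0) (D i) \<le> \<pi>"
    and iv2: "cprob M (\<lambda>\<omega>. A i \<omega> \<noteq> A0) (\<lambda>\<omega>. \<not> D i \<omega>) \<le> \<pi>"
    and iv3: "cprob M (\<lambda>\<omega>. A i \<omega> = AM1) (\<lambda>\<omega>. D i \<omega> \<and> A i \<omega> \<noteq> A0) = \<epsilon>"
    and iv4: "cprob M (\<lambda>\<omega>. A i \<omega> = AM1) (\<lambda>\<omega>. \<not> D i \<omega> \<and> A i \<omega> \<noteq> A0) = \<epsilon>"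
    \<comment> \<open>anticipatory effect tau_g (the model requires the two expressions to agree)\<close>
    and tau1: "\<tau> = cexp M (\<lambda>\<omega>. g (Y0 i A1 True \<omega>) - g (Y0 i A0 False \<omega>))
                         (\<lambda>\<omega>. D i \<omega> \<and> A i \<omega> = A1)"
    and tau2: "\<tau> = cexp M (\<lambda>\<omega>. g (Y0 i AM1 False \<omega>) - g (Y0 i A0 False \<omega>))
                         (\<lambda>\<omega>. \<not> D i \<omega> \<and> A i \<omega> = AM1)"
    \<comment> \<open>parameter of interest mu_g\<close>
    and mu: "\<mu> = cexp M (\<lambda>\<omega>. g (Y1 i True \<omega>) - g (Y1 i False \<omega>)) (D i)"
    \<comment> \<open>(v)\<close>
    and v: "\<bar>\<tau>\<bar> \<le> \<bar>\<mu>\<bar>"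
    and m: "m = cexp M (\<lambda>\<omega>. g (Y1 i (D i \<omega>) \<omega>) - g (Y0 i (A i \<omega>) (D i \<omega>) \<omega>)) (D i)
              - cexp M (\<lambda>\<omega>. g (Y1 i (D i \<omega>) \<omega>) - g (Y0 i (A i \<omega>) (D i \<omega>) \<omega>)) (\<lambda>\<omega>. \<not> D i \<omega>)"
  shows "min (m / (1 + sgn (\<tau> * \<mu>) * \<pi> * \<epsilon>)) (m / (1 - sgn (\<tau> * \<mu>) * \<pi> * (1 - \<epsilon>))) \<le> \<mu>
       \<and> \<mu> \<le> max (m / (1 + sgn (\<tau> * \<mu>) * \<pi> * \<epsilon>)) (m / (1 - sgn (\<tau> * \<mu>) * \<pi> * (1 - \<epsilon>)))"
proof -
  interpret prob_space M by (rule P)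
  have mD[measurable]: "D i \<in> measurable M (count_space UNIV)" using meas_D i by auto
  have mA[measurable]: "A i \<in> measurable M (count_space UNIV)" using meas_A i by auto
  define SD where "SD = {\<omega> \<in> space M. D i \<omega>}"
  define SN where "SN = {\<omega> \<in> space M. \<not> D i \<omega>}"
  define SD1 where "SD1 = {\<omega> \<in> space M. D i \<omega> \<and> A i \<omega> = A1}"
  define SDam where "SDam = {\<omega> \<in> space M. D i \<omega> \<and> A i \<omega> = AM1}"
  define SDnz where "SDnz = {\<omega> \<in> space M. D i \<omega> \<and> A i \<omega> \<noteq> A0}"
  define SNam where "SNam = {\<omega> \<in> space M. \<not> D i \<omega> \<and> A i \<omega> = AM1}"
  define SNnz where "SNnz = {\<omega> \<in> space M. \<not> D i \<omega> \<and> A i \<omega> \<noteq> A0}"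
  have sets: "SD \<in> sets M" "SN \<in> sets M" "SD1 \<in> sets M" "SDam \<in> sets M" "SDnz \<in> sets M"
     "SNam \<in> sets M" "SNnz \<in> sets M"
    unfolding SD_def SN_def SD1_def SDam_def SDnz_def SNam_def SNnz_def
    by (measurable; fail)+
  define P1 where "P1 = measure M SD"
  define P0 where "P0 = measure M SN"
  have SN_eq: "SN = space M - SD" unfolding SN_def SD_def by auto
  have P0: "P0 = 1 - P1" unfolding P0_def P1_def SN_eq using sets by (simp add: prob_compl)
  have P1pos: "P1 > 0" and P0pos: "P0 > 0" using D_pos D_lt1 P0 unfolding P1_def SD_def by auto
  define gT where "gT = (\<lambda>\<omega>. g (Y1 i True \<omega>))"
  define gF where "gF = (\<lambda>\<omega>. g (Y1 i False \<omega>))"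
  define g00 where "g00 = (\<lambda>\<omega>. g (Y0 i A0 False \<omega>))"
  define g1T where "g1T = (\<lambda>\<omega>. g (Y0 i A1 True \<omega>))"
  define gmF where "gmF = (\<lambda>\<omega>. g (Y0 i AM1 False \<omega>))"
  have ints: "integrable M gT" "integrable M gF" "integrable M g00" "integrable M g1T" "integrable M gmF"
    unfolding gT_def gF_def g00_def g1T_def gmF_def using int_Y0 int_Y1 i by auto
  define h where "h = (\<lambda>\<omega>. g (Y1 i (D i \<omega>) \<omega>) - g (Y0 i (A i \<omega>) (D i \<omega>) \<omega>))"
  define c where "c = cexp M (\<lambda>\<omega>. gF \<omega> - g00 \<omega>) (D i)"
  have c0: "c = cexp M (\<lambda>\<omega>. gF \<omega> - g00 \<omega>) (\<lambda>\<omega>. \<not> D i \<omega>)"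
    using iii unfolding c_def gF_def g00_def by simp
  have Ic1: "(\<integral>\<omega>. indicator SD \<omega> * (gF \<omega> - g00 \<omega>) \<partial>M) = c * P1"
    using cexp_mult[OF P, of "D i" "\<lambda>\<omega>. gF \<omega> - g00 \<omega>"] sets unfolding c_def P1_def SD_def by simp
  have Ic0: "(\<integral>\<omega>. indicator SN \<omega> * (gF \<omega> - g00 \<omega>) \<partial>M) = c * P0"
    using cexp_mult[OF P, of "\<lambda>\<omega>. \<not> D i \<omega>" "\<lambda>\<omega>. gF \<omega> - g00 \<omega>"] sets unfolding c0 P0_def SN_def by simp
  have Imu: "(\<integral>\<omega>. indicator SD \<omega> * (gT \<omega> - gF \<omega>) \<partial>M) = \<mu> * P1"
    using cexp_mult[OF P, of "D i" "\<lambda>\<omega>. gT \<omega> - gF \<omega>"] sets unfolding mu P1_def SD_def gT_def gF_def by simp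
  have It1: "(\<integral>\<omega>. indicator SD1 \<omega> * (g1T \<omega> - g00 \<omega>) \<partial>M) = \<tau> * measure M SD1"
    using cexp_mult[OF P, of "\<lambda>\<omega>. D i \<omega> \<and> A i \<omega> = A1" "\<lambda>\<omega>. g1T \<omega> - g00 \<omega>"] sets
    unfolding tau1 SD1_def g1T_def g00_def by simp
  have It2: "(\<integral>\<omega>. indicator SNam \<omega> * (gmF \<omega> - g00 \<omega>) \<partial>M) = \<tau> * measure M SNam"
    using cexp_mult[OF P, of "\<lambda>\<omega>. \<not> D i \<omega> \<and> A i \<omega> = AM1" "\<lambda>\<omega>. gmF \<omega> - g00 \<omega>"] sets
    unfolding tau2 SNam_def gmF_def g00_def by simp
  have hD: "(\<integral>\<omega>. indicator SD \<omega> * h \<omega> \<partial>M) = \<mu> * P1 + c * P1 - \<tau> * measure M SD1"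
  proof -
    have "(\<integral>\<omega>. indicator SD \<omega> * h \<omega> \<partial>M) = (\<integral>\<omega>. indicator SD \<omega> * (gT \<omega> - gF \<omega>) + indicator SD \<omega> * (gF \<omega> - g00 \<omega>)
       - indicator SD1 \<omega> * (g1T \<omega> - g00 \<omega>) \<partial>M)"
    proof (rule Bochner_Integration.integral_cong[OF refl])
      fix \<omega> assume w: "\<omega> \<in> space M"
      show "indicator SD \<omega> * h \<omega> = indicator SD \<omega> * (gT \<omega> - gF \<omega>) + indicator SD \<omega> * (gF \<omega> - g00 \<omega>)
       - indicator SD1 \<omega> * (g1T \<omega> - g00 \<omega>)"
        using ii[OF i w] w unfolding SD_def SD1_def h_def gT_def gF_def g00_def g1T_def
        by (cases "A i \<omega>"; cases "D i \<omega>") (auto simp: indicator_def)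
    qed
    also have "\<dots> = \<mu> * P1 + c * P1 - \<tau> * measure M SD1"
    proof -
      have a: "integrable M (\<lambda>\<omega>. indicator SD \<omega> * (gT \<omega> - gF \<omega>))"
        using ints sets by (intro int_ind Bochner_Integration.integrable_diff) auto
      have b: "integrable M (\<lambda>\<omega>. indicator SD \<omega> * (gF \<omega> - g00 \<omega>))"
        using ints sets by (intro int_ind Bochner_Integration.integrable_diff) auto
      have cc: "integrable M (\<lambda>\<omega>. indicator SD1 \<omega> * (g1T \<omega> - g00 \<omega>))"
        using ints sets by (intro int_ind Bochner_Integration.integrable_diff) auto
      show ?thesis
        by (simp only: Bochner_Integration.integral_diff[OF Bochner_Integration.integrable_add[OF a b] cc]
            Bochner_Integration.integral_add[OF a b] Ic1 Imu It1)
    qed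
    finally show ?thesis .
  qed
  have hN: "(\<integral>\<omega>. indicator SN \<omega> * h \<omega> \<partial>M) = c * P0 - \<tau> * measure M SNam"
  proof -
    have "(\<integral>\<omega>. indicator SN \<omega> * h \<omega> \<partial>M) = (\<integral>\<omega>. indicator SN \<omega> * (gF \<omega> - g00 \<omega>)
       - indicator SNam \<omega> * (gmF \<omega> - g00 \<omega>) \<partial>M)"
    proof (rule Bochner_Integration.integral_cong[OF refl])
      fix \<omega> assume w: "\<omega> \<in> space M"
      show "indicator SN \<omega> * h \<omega> = indicator SN \<omega> * (gF \<omega> - g00 \<omega>)
       - indicator SNam \<omega> * (gmF \<omega> - g00 \<omega>)"
        using ii[OF i w] w unfolding SN_def SNam_def h_def gF_def g00_def gmF_def
        by (cases "A i \<omega>"; cases "D i \<omega>") (auto simp: indicator_def)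
    qed
    also have "\<dots> = c * P0 - \<tau> * measure M SNam"
    proof -
      have b: "integrable M (\<lambda>\<omega>. indicator SN \<omega> * (gF \<omega> - g00 \<omega>))"
        using ints sets by (intro int_ind Bochner_Integration.integrable_diff) auto
      have cc: "integrable M (\<lambda>\<omega>. indicator SNam \<omega> * (gmF \<omega> - g00 \<omega>))"
        using ints sets by (intro int_ind Bochner_Integration.integrable_diff) auto
      show ?thesis
        by (simp only: Bochner_Integration.integral_diff[OF b cc] Ic0 It2)
    qed
    finally show ?thesis .
  qed
  define k where "k = measure M SD1 / P1 - measure M SNam / P0"
  have mk: "m = \<mu> - \<tau> * k"
  proof -
    have "m = (\<integral>\<omega>. indicator SD \<omega> * h \<omega> \<partial>M) / P1 - (\<integral>\<omega>. indicator SN \<omega> * h \<omega> \<partial>M) / P0"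
      unfolding m cexp_def h_def SD_def SN_def P1_def P0_def by simp
    also have "\<dots> = \<mu> - \<tau> * k" unfolding hD hN k_def using P1pos P0pos
      by (simp add: field_simps)
    finally show ?thesis .
  qed
  have "SDnz = SD1 \<union> SDam" "SD1 \<inter> SDam = {}" unfolding SDnz_def SD1_def SDam_def
    by (auto, case_tac "A i x", auto)
  hence add1: "measure M SDnz = measure M SD1 + measure M SDam"
    using sets by (simp add: finite_measure_Union)
  have e1: "\<epsilon> * measure M SDnz = measure M SDam"
  proof -
    have se: "{\<omega> \<in> space M. A i \<omega> = AM1 \<and> (D i \<omega> \<and> A i \<omega> \<noteq> A0)} = SDam"
      unfolding SDam_def by auto
    have "cprob M (\<lambda>\<omega>. A i \<omega> = AM1) (\<lambda>\<omega>. D i \<omega> \<and> A i \<omega> \<noteq> A0) * measure M SDnz = measure M SDam"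
      by (subst se[symmetric], unfold SDnz_def, rule cprob_mult[OF P]) (use sets in \<open>auto simp: SDnz_def\<close>)
    thus ?thesis using iv3 by simp
  qed
  have e2: "\<epsilon> * measure M SNnz = measure M SNam"
  proof -
    have se: "{\<omega> \<in> space M. A i \<omega> = AM1 \<and> (\<not> D i \<omega> \<and> A i \<omega> \<noteq> A0)} = SNam"
      unfolding SNam_def by auto
    have "cprob M (\<lambda>\<omega>. A i \<omega> = AM1) (\<lambda>\<omega>. \<not> D i \<omega> \<and> A i \<omega> \<noteq> A0) * measure M SNnz = measure M SNam"
      by (subst se[symmetric], unfold SNnz_def, rule cprob_mult[OF P]) (use sets in \<open>auto simp: SNnz_def\<close>)
    thus ?thesis using iv4 by simp
  qed
  have q1: "cprob M (\<lambda>\<omega>. A i \<omega> \<noteq> A0) (D i) * P1 = measure M SDnz"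
    using cprob_mult[OF P, of "\<lambda>\<omega>. A i \<omega> \<noteq> A0" "D i"] sets
    unfolding SDnz_def SD_def P1_def by (auto simp: conj_commute)
  have q0: "cprob M (\<lambda>\<omega>. A i \<omega> \<noteq> A0) (\<lambda>\<omega>. \<not> D i \<omega>) * P0 = measure M SNnz"
    using cprob_mult[OF P, of "\<lambda>\<omega>. A i \<omega> \<noteq> A0" "\<lambda>\<omega>. \<not> D i \<omega>"] sets
    unfolding SNnz_def SN_def P0_def by (auto simp: conj_commute)
  have b1: "measure M SDnz / P1 \<le> \<pi>" using q1 iv1 P1pos by (metis nonzero_mult_div_cancel_right order_less_irrefl)
  have b0: "measure M SNnz / P0 \<le> \<pi>" using q0 iv2 P0pos by (metis nonzero_mult_div_cancel_right order_less_irrefl)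
  have k1: "measure M SD1 / P1 = (1 - \<epsilon>) * (measure M SDnz / P1)"
    using add1 e1 by (simp add: algebra_simps)
  have k0: "measure M SNam / P0 = \<epsilon> * (measure M SNnz / P0)"
    using e2 by simp
  have nn: "0 \<le> measure M SDnz / P1" "0 \<le> measure M SNnz / P0" using P1pos P0pos by auto
  have "(1 - \<epsilon>) * (measure M SDnz / P1) \<le> (1 - \<epsilon>) * \<pi>" using b1 eps by (intro mult_left_mono) auto
  moreover have "\<epsilon> * (measure M SNnz / P0) \<le> \<epsilon> * \<pi>" using b0 eps by (intro mult_left_mono) auto
  moreover have "0 \<le> (1 - \<epsilon>) * (measure M SDnz / P1)" "0 \<le> \<epsilon> * (measure M SNnz / P0)"
    using nn eps by (simp_all only: mult_nonneg_nonneg diff_ge_0_iff_ge)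
  ultimately have kb: "-(\<pi>*\<epsilon>) \<le> k" "k \<le> \<pi>*(1-\<epsilon>)" unfolding k_def k1 k0 by (auto simp: algebra_simps)
  show ?thesis by (rule alg[OF mk kb v pi eps])
qed

end
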